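(* Let $(\mathbf A,\tau)$ be a state-morphism algebra. For every congruence $\phi$ of the subalgebra $\tau(\mathbf A)$, the relation $\theta_\phi=\{(x,y)\in A\times A:(\tau(x),\tau(y))\in\phi\}$ is a congruence of $(\mathbf A,\tau)$ and $\theta_\phi\cap\tau(A)^2=\phi$. In addition, $\theta_\tau=\{(x,y)\in A\times A:\tau(x)=\tau(y)\}$ is a congruence of $(\mathbf A,\tau)$, $\phi\subseteq\theta_\phi$, and $\Theta_\tau(\phi)\subseteq\theta_\phi$.
   Context: Let $F$ be an arbitrary algebraic type. A state-morphism on an algebra $\mathbf A$ of type $F$ is an endomorphism $\tau:\mathbf A\to\mathbf A$ with $\tau\circ\tau=\tau$; the pair $(\mathbf A,\tau)$, viewed as an algebra of type $F$ extended by the unary operation $\tau$, is a state-morphism algebra. $\tau(A)=\{\tau(x):x\in A\}$ is the universe of a subalgebra $\tau(\mathbf A)$ of $\mathbf A$. $\mathrm{Con}(\mathbf A,\tau)$ denotes the congruences of $\mathbf A$ compatible with $\tau$. For $\phi\subseteq A^2$, $\Theta_\tau(\phi)$ denotes the congruence of $(\mathbf A,\tau)$ generated by $\phi$. *)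

theory Defs
  imports Main
begin

text \<open>An algebra of type F: carrier A, arity function ar on the operation symbols 'f,
  and interpretation ops (an operation symbol f applied to a list of ar f arguments).\<close>

definition algebra :: "'a set \<Rightarrow> ('f \<Rightarrow> nat) \<Rightarrow> ('f \<Rightarrow> 'a list \<Rightarrow> 'a) \<Rightarrow> bool" where
  "algebra A ar ops \<longleftrightarrow>
     (\<forall>f xs. length xs = ar f \<and> set xs \<subseteq> A \<longrightarrow> ops f xs \<in> A)"

definition endomorphism :: "'a set \<Rightarrow> ('f \<Rightarrow> nat) \<Rightarrow> ('f \<Rightarrow> 'a list \<Rightarrow> 'a) \<Rightarrow> ('a \<Rightarrow> 'a) \<Rightarrow> bool" where
  "endomorphism A ar ops \<tau> \<longleftrightarrow>
     (\<forall>x\<in>A. \<tau> x \<in> A) \<and>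
     (\<forall>f xs. length xs = ar f \<and> set xs \<subseteq> A \<longrightarrow> \<tau> (ops f xs) = ops f (map \<tau> xs))"

definition state_morphism :: "'a set \<Rightarrow> ('f \<Rightarrow> nat) \<Rightarrow> ('f \<Rightarrow> 'a list \<Rightarrow> 'a) \<Rightarrow> ('a \<Rightarrow> 'a) \<Rightarrow> bool" where
  "state_morphism A ar ops \<tau> \<longleftrightarrow> endomorphism A ar ops \<tau> \<and> (\<forall>x\<in>A. \<tau> (\<tau> x) = \<tau> x)"

definition state_morphism_algebra :: "'a set \<Rightarrow> ('f \<Rightarrow> nat) \<Rightarrow> ('f \<Rightarrow> 'a list \<Rightarrow> 'a) \<Rightarrow> ('a \<Rightarrow> 'a) \<Rightarrow> bool" where
  "state_morphism_algebra A ar ops \<tau> \<longleftrightarrow> algebra A ar ops \<and> state_morphism A ar ops \<tau>"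

definition congruence :: "'a set \<Rightarrow> ('f \<Rightarrow> nat) \<Rightarrow> ('f \<Rightarrow> 'a list \<Rightarrow> 'a) \<Rightarrow> 'a rel \<Rightarrow> bool" where
  "congruence A ar ops \<theta> \<longleftrightarrow> equiv A \<theta> \<and>
     (\<forall>f xs ys. length xs = ar f \<and> length ys = ar f \<and> list_all2 (\<lambda>x y. (x, y) \<in> \<theta>) xs ys
        \<longrightarrow> (ops f xs, ops f ys) \<in> \<theta>)"

definition sm_congruence :: "'a set \<Rightarrow> ('f \<Rightarrow> nat) \<Rightarrow> ('f \<Rightarrow> 'a list \<Rightarrow> 'a) \<Rightarrow> ('a \<Rightarrow> 'a) \<Rightarrow> 'a rel \<Rightarrow> bool" where
  "sm_congruence A ar ops \<tau> \<theta> \<longleftrightarrow> congruence A ar ops \<theta> \<and> (\<forall>x y. (x, y) \<in> \<theta> \<longrightarrow> (\<tau> x, \<tau> y) \<in> \<theta>)"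

definition sm_generated :: "'a set \<Rightarrow> ('f \<Rightarrow> nat) \<Rightarrow> ('f \<Rightarrow> 'a list \<Rightarrow> 'a) \<Rightarrow> ('a \<Rightarrow> 'a) \<Rightarrow> 'a rel \<Rightarrow> 'a rel" where
  "sm_generated A ar ops \<tau> \<phi> = \<Inter>{\<theta>. sm_congruence A ar ops \<tau> \<theta> \<and> \<phi> \<subseteq> \<theta>}"

end

theory Submission
  imports Defs
begin

lemma l2_A:
  assumes "list_all2 (\<lambda>x y. (x, y) \<in> {(x, y). x \<in> A \<and> y \<in> A \<and> P x y}) xs ys"
  shows "set xs \<subseteq> A \<and> set ys \<subseteq> A \<and> list_all2 P xs ys"
  using assms by (induction xs ys rule: list_all2_induct) auto

lemma l2_map:
  assumes "list_all2 P xs ys" "\<And>x y. P x y \<Longrightarrow> Q (t x) (t y)"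
  shows "list_all2 Q (map t xs) (map t ys)"
  using assms by (induction xs ys rule: list_all2_induct) auto

lemma l2_eq: "list_all2 (\<lambda>x y. t x = t y) xs ys \<Longrightarrow> map t xs = map t ys"
  by (induction xs ys rule: list_all2_induct) auto

theorem lemma3p2:
  fixes A :: "'a set" and ar :: "'f \<Rightarrow> nat" and ops :: "'f \<Rightarrow> 'a list \<Rightarrow> 'a"
    and \<tau> :: "'a \<Rightarrow> 'a" and \<phi> :: "'a rel"
  assumes "state_morphism_algebra A ar ops \<tau>"
    and "congruence (\<tau> ` A) ar ops \<phi>"
  shows "sm_congruence A ar ops \<tau> {(x, y). x \<in> A \<and> y \<in> A \<and> (\<tau> x, \<tau> y) \<in> \<phi>}
       \<and> {(x, y). x \<in> A \<and> y \<in> A \<and> (\<tau> x, \<tau> y) \<in> \<phi>} \<inter> (\<tau> ` A \<times> \<tau> ` A) = \<phi>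
       \<and> sm_congruence A ar ops \<tau> {(x, y). x \<in> A \<and> y \<in> A \<and> \<tau> x = \<tau> y}
       \<and> \<phi> \<subseteq> {(x, y). x \<in> A \<and> y \<in> A \<and> (\<tau> x, \<tau> y) \<in> \<phi>}
       \<and> sm_generated A ar ops \<tau> \<phi> \<subseteq> {(x, y). x \<in> A \<and> y \<in> A \<and> (\<tau> x, \<tau> y) \<in> \<phi>}"
proof -
  have alg: "\<And>f xs. length xs = ar f \<Longrightarrow> set xs \<subseteq> A \<Longrightarrow> ops f xs \<in> A"
    using assms(1) unfolding state_morphism_algebra_def algebra_def by blast
  have tA: "\<And>x. x \<in> A \<Longrightarrow> \<tau> x \<in> A"
    and hom: "\<And>f xs. length xs = ar f \<Longrightarrow> set xs \<subseteq> A \<Longrightarrow> \<tau> (ops f xs) = ops f (map \<tau> xs)"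
    and idem: "\<And>x. x \<in> A \<Longrightarrow> \<tau> (\<tau> x) = \<tau> x"
    using assms(1) unfolding state_morphism_algebra_def state_morphism_def endomorphism_def by blast+
  have eqphi: "equiv (\<tau> ` A) \<phi>"
    and cphi: "\<And>f xs ys. length xs = ar f \<Longrightarrow> length ys = ar f \<Longrightarrow> list_all2 (\<lambda>x y. (x, y) \<in> \<phi>) xs ys
        \<Longrightarrow> (ops f xs, ops f ys) \<in> \<phi>"
    using assms(2) unfolding congruence_def by blast+
  have phisub: "\<phi> \<subseteq> \<tau> ` A \<times> \<tau> ` A" using eqphi unfolding equiv_def refl_on_def by blast
  have phirefl: "\<And>x. x \<in> \<tau> ` A \<Longrightarrow> (x, x) \<in> \<phi>" using eqphi unfolding equiv_def refl_on_def by blast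
  have phisym: "\<And>x y. (x, y) \<in> \<phi> \<Longrightarrow> (y, x) \<in> \<phi>" using eqphi unfolding equiv_def sym_def by blast
  have phitr: "\<And>x y z. (x, y) \<in> \<phi> \<Longrightarrow> (y, z) \<in> \<phi> \<Longrightarrow> (x, z) \<in> \<phi>" using eqphi unfolding equiv_def trans_def by blast
  define T where "T = {(x, y). x \<in> A \<and> y \<in> A \<and> (\<tau> x, \<tau> y) \<in> \<phi>}"
  have c1: "sm_congruence A ar ops \<tau> T"
    unfolding sm_congruence_def congruence_def
  proof (intro conjI allI impI)
    show "equiv A T" unfolding equiv_def refl_on_def sym_def trans_def T_def
      using phirefl phisym phitr by blast
  next
    fix f xs ys assume h: "length xs = ar f \<and> length ys = ar f \<and> list_all2 (\<lambda>x y. (x, y) \<in> T) xs ys"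
    from l2_A[of A "\<lambda>x y. (\<tau> x, \<tau> y) \<in> \<phi>" xs ys] h have s: "set xs \<subseteq> A" "set ys \<subseteq> A"
      and l: "list_all2 (\<lambda>x y. (\<tau> x, \<tau> y) \<in> \<phi>) xs ys" unfolding T_def by auto
    have "list_all2 (\<lambda>x y. (x, y) \<in> \<phi>) (map \<tau> xs) (map \<tau> ys)"
      by (rule l2_map[OF l]) auto
    hence "(ops f (map \<tau> xs), ops f (map \<tau> ys)) \<in> \<phi>" using cphi h by simp
    thus "(ops f xs, ops f ys) \<in> T" unfolding T_def using hom h s alg by auto
  next
    fix x y assume "(x, y) \<in> T" thus "(\<tau> x, \<tau> y) \<in> T" unfolding T_def using tA idem by auto
  qed
  have c2: "T \<inter> (\<tau> ` A \<times> \<tau> ` A) = \<phi>"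
  proof
    show "T \<inter> (\<tau> ` A \<times> \<tau> ` A) \<subseteq> \<phi>" unfolding T_def using idem by auto
    show "\<phi> \<subseteq> T \<inter> (\<tau> ` A \<times> \<tau> ` A)"
    proof
      fix p assume p: "p \<in> \<phi>"
      then obtain a b where ab: "p = (\<tau> a, \<tau> b)" "a \<in> A" "b \<in> A" using phisub by blast
      thus "p \<in> T \<inter> (\<tau> ` A \<times> \<tau> ` A)" unfolding T_def using p idem tA by auto
    qed
  qed
  have c3: "sm_congruence A ar ops \<tau> {(x, y). x \<in> A \<and> y \<in> A \<and> \<tau> x = \<tau> y}"
    unfolding sm_congruence_def congruence_def
  proof (intro conjI allI impI)
    show "equiv A {(x, y). x \<in> A \<and> y \<in> A \<and> \<tau> x = \<tau> y}"
      unfolding equiv_def refl_on_def sym_def trans_def by auto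
  next
    fix f xs ys assume h: "length xs = ar f \<and> length ys = ar f \<and> list_all2 (\<lambda>x y. (x, y) \<in> {(x, y). x \<in> A \<and> y \<in> A \<and> \<tau> x = \<tau> y}) xs ys"
    from l2_A[of A "\<lambda>x y. \<tau> x = \<tau> y" xs ys] h have s: "set xs \<subseteq> A" "set ys \<subseteq> A"
      and l: "list_all2 (\<lambda>x y. \<tau> x = \<tau> y) xs ys" by auto
    have "map \<tau> xs = map \<tau> ys" by (rule l2_eq[OF l])
    thus "(ops f xs, ops f ys) \<in> {(x, y). x \<in> A \<and> y \<in> A \<and> \<tau> x = \<tau> y}"
      using hom h s alg by auto
  next
    fix x y assume "(x, y) \<in> {(x, y). x \<in> A \<and> y \<in> A \<and> \<tau> x = \<tau> y}"
    thus "(\<tau> x, \<tau> y) \<in> {(x, y). x \<in> A \<and> y \<in> A \<and> \<tau> x = \<tau> y}" using tA idem by auto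
  qed
  have c4: "\<phi> \<subseteq> T" using c2 by blast
  have c5: "sm_generated A ar ops \<tau> \<phi> \<subseteq> T"
    unfolding sm_generated_def using c1 c4 by blast
  show ?thesis using c1 c2 c3 c4 c5 unfolding T_def by blast
qed

end
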